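(* In the altruistic controlled social learning model described in the context, the optimal value function $V^*_A:[0,1]\to\mathbb{R}$ is convex in the public belief $b$.
   Context: A binary state $\omega\in\{G,B\}$ is drawn once with $\mathbb{P}(\omega=G)=b_1$. Agents $i=1,2,\dots$ act in sequence. Before agent $i$ acts, a planner chooses a signal precision $q_i\in[0.5,1]$; agent $i$ receives a private signal $s_i\in\{G,B\}$ with $\mathbb{P}(s_i=\omega)=q_i$, conditionally independent of all other signals and of the history given $\omega$. Let $y(b,q)=1+2bq-b-q$ (probability of signal $G$ at public belief $b$) and $z(b,q)=b+q-2bq=1-y(b,q)$. Agent $i$, with public belief $b_i$, takes action $a_i=s_i$ if $1-q_i\le b_i\le q_i$, $a_i=G$ if $b_i>q_i$, $a_i=B$ if $b_i<1-q_i$. The public belief evolves by $b_{i+1}=\frac{q_ib_i}{y(b_i,q_i)}$ if $s_i=G$ and $b_{i+1}=\frac{(1-q_i)b_i}{z(b_i,q_i)}$ if $s_i=B$ when $1-q_i\le b_i\le q_i$, and $b_{i+1}=b_i$ otherwise. Cost of an incorrect action is $C>0$. The altruistic planner has baseline precision $p\in[0.5,1)$ and a cost function $\beta:[0.5,1]\to[0,\infty)$ that is non-negative, increasing, continuous and concave with $\beta(p)=0$; its instantaneous reward is $r_A(b,q)=-\beta(q)-C\min(b,1-b,1-q)$ (the second term being $-C$ times the probability that $a_i\ne\omega$). Policies are deterministic Markov maps $\pi:[0,1]\to[0.5,1]$ with $q_i=\pi(b_i)$. For a discount factor $\delta\in[0,1)$, $V^\pi_A(b)=\mathbb{E}\big[\sum_{i\ge1}\delta^{i-1}r_A(b_i,\pi(b_i))\mid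 b_1=b\big]$ and $V^*_A(b)=\sup_\pi V^\pi_A(b)$. *)

theory Defs
  imports "HOL-Analysis.Analysis" "HOL-Probability.Probability"
begin

(* probability of signal G at public belief b with precision q *)
definition sig_y :: "real \<Rightarrow> real \<Rightarrow> real" where
  "sig_y b q = 1 + 2*b*q - b - q"

definition sig_z :: "real \<Rightarrow> real \<Rightarrow> real" where
  "sig_z b q = b + q - 2*b*q"

definition belief_step :: "real \<Rightarrow> real \<Rightarrow> real pmf" where
  "belief_step b q =
     (if 1 - q \<le> b \<and> b \<le> q
      then map_pmf (\<lambda>s. if s then q * b / sig_y b q else (1 - q) * b / sig_z b q)
                   (bernoulli_pmf (sig_y b q))
      else return_pmf b)"

(* distribution of b_{n+1} given b_1 = b under Markov policy pol *)
fun belief_dist :: "(real \<Rightarrow> real) \<Rightarrow> real \<Rightarrow> nat \<Rightarrow> real pmf" where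
  "belief_dist pol b 0 = return_pmf b"
| "belief_dist pol b (Suc n) = bind_pmf (belief_dist pol b n) (\<lambda>x. belief_step x (pol x))"

definition r_A :: "(real \<Rightarrow> real) \<Rightarrow> real \<Rightarrow> real \<Rightarrow> real \<Rightarrow> real" where
  "r_A \<beta> C b q = - \<beta> q - C * min b (min (1 - b) (1 - q))"

definition policies :: "(real \<Rightarrow> real) set" where
  "policies = {pol. \<forall>b\<in>{0..1}. pol b \<in> {1/2..1}}"

definition V_pol :: "(real \<Rightarrow> real) \<Rightarrow> real \<Rightarrow> real \<Rightarrow> (real \<Rightarrow> real) \<Rightarrow> real \<Rightarrow> real" where
  "V_pol \<beta> C \<delta> pol b =
     (\<Sum>n. \<delta> ^ n * measure_pmf.expectation (belief_dist pol b n) (\<lambda>x. r_A \<beta> C x (pol x)))"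

definition V_opt :: "(real \<Rightarrow> real) \<Rightarrow> real \<Rightarrow> real \<Rightarrow> real \<Rightarrow> real" where
  "V_opt \<beta> C \<delta> b = (SUP pol\<in>policies. V_pol \<beta> C \<delta> pol b)"

end

theory Submission
  imports Defs
begin



definition pG :: "real \<Rightarrow> real \<Rightarrow> real" where "pG b q = q*b / sig_y b q"
definition pB :: "real \<Rightarrow> real \<Rightarrow> real" where "pB b q = (1-q)*b / sig_z b q"
definition EV :: "(real \<Rightarrow> real) \<Rightarrow> real \<Rightarrow> real \<Rightarrow> real" where
  "EV V b q = (if 1 - q \<le> b \<and> b \<le> q then sig_y b q * V (pG b q) + (1 - sig_y b q) * V (pB b q) else V b)"
definition persp :: "(real \<Rightarrow> real) \<Rightarrow> real \<Rightarrow> real \<Rightarrow> real" where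
  "persp V u w = (u + w) * V (u / (u + w))"

lemma sig_y_eq: "sig_y b q = q*b + (1-q)*(1-b)" by (simp add: sig_y_def algebra_simps)
lemma sig_z_eq: "sig_z b q = 1 - sig_y b q" by (simp add: sig_y_def sig_z_def algebra_simps)
lemma sig_z_eq2: "sig_z b q = (1-q)*b + q*(1-b)" by (simp add: sig_z_def algebra_simps)

lemma y01: assumes "0 \<le> b" "b \<le> 1" "0 \<le> q" "q \<le> 1" shows "0 \<le> sig_y b q" "sig_y b q \<le> 1"
proof -
  have a: "0 \<le> q*b" "0 \<le> (1-q)*(1-b)" "0 \<le> (1-q)*b" "0 \<le> q*(1-b)" using assms by auto
  have "q*b + (1-q)*(1-b) + ((1-q)*b + q*(1-b)) = 1" by (simp add: algebra_simps)
  then show "0 \<le> sig_y b q" "sig_y b q \<le> 1" unfolding sig_y_eq using a by linarith+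
qed

lemma frac01: fixes u w :: real assumes "0 \<le> u" "0 \<le> w" shows "0 \<le> u/(u+w)" "u/(u+w) \<le> 1"
proof -
  show "0 \<le> u/(u+w)" using assms by (intro divide_nonneg_nonneg) auto
  show "u/(u+w) \<le> 1" using assms by (cases "u+w = 0") (auto simp: divide_le_eq_1)
qed

lemma pG01: assumes "0 \<le> b" "b \<le> 1" "0 \<le> q" "q \<le> 1" shows "pG b q \<in> {0..1}"
  using frac01[of "q*b" "(1-q)*(1-b)"] assms unfolding pG_def sig_y_eq by auto

lemma pB01: assumes "0 \<le> b" "b \<le> 1" "0 \<le> q" "q \<le> 1" shows "pB b q \<in> {0..1}"
  using frac01[of "(1-q)*b" "q*(1-b)"] assms unfolding pB_def sig_z_eq2 by auto

lemma exp_step: assumes "0 \<le> b" "b \<le> 1" "0 \<le> q" "q \<le> 1"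
  shows "measure_pmf.expectation (belief_step b q) V = EV V b q"
  using y01[OF assms] unfolding belief_step_def EV_def pG_def pB_def
  by (auto simp: algebra_simps)

lemma set_step: assumes "0 \<le> b" "b \<le> 1" "0 \<le> q" "q \<le> 1"
  shows "set_pmf (belief_step b q) \<subseteq> {0..1}" "finite (set_pmf (belief_step b q))"
proof -
  have "set_pmf (belief_step b q) \<subseteq> {pG b q, pB b q, b}"
    unfolding belief_step_def pG_def pB_def by auto
  then show "set_pmf (belief_step b q) \<subseteq> {0..1}" "finite (set_pmf (belief_step b q))"
    using pG01[OF assms] pB01[OF assms] assms by (auto intro: finite_subset)
qed

lemma persp_conv:
  assumes V: "convex_on {0..1} V" and nn: "0 \<le> u1" "0 \<le> w1" "0 \<le> u2" "0 \<le> w2"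
    and t: "0 \<le> t" "t \<le> 1"
    and u: "u = (1-t)*u1 + t*u2" and w: "w = (1-t)*w1 + t*w2"
  shows "persp V u w \<le> (1-t) * persp V u1 w1 + t * persp V u2 w2"
proof -
  define s1 where "s1 = u1 + w1"
  define s2 where "s2 = u2 + w2"
  show ?thesis
  proof (cases "s1 = 0 \<or> s2 = 0")
    case True
    then show ?thesis
    proof
      assume "s1 = 0"
      then have z: "u1 = 0" "w1 = 0" using nn s1_def by auto
      show ?thesis
      proof (cases "t = 0")
        case True then show ?thesis using z u w by (simp add: persp_def)
      next
        case False
        have "u / (u+w) = u2/(u2+w2)" using z u w False by (simp add: distrib_left[symmetric])
        moreover have "u + w = t*(u2+w2)" using z u w by (simp add: algebra_simps)
        ultimately show ?thesis using z by (simp add: persp_def)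
      qed
    next
      assume "s2 = 0"
      then have z: "u2 = 0" "w2 = 0" using nn s2_def by auto
      show ?thesis
      proof (cases "t = 1")
        case True then show ?thesis using z u w by (simp add: persp_def)
      next
        case False
        have "u / (u+w) = u1/(u1+w1)" using z u w False by (simp add: distrib_left[symmetric])
        moreover have "u + w = (1-t)*(u1+w1)" using z u w by (simp add: algebra_simps)
        ultimately show ?thesis using z by (simp add: persp_def)
      qed
    qed
  next
    case False
    then have s1p: "s1 > 0" and s2p: "s2 > 0" using nn s1_def s2_def by auto
    define s where "s = (1-t)* s1 + t* s2"
    have sp: "s > 0" using s1p s2p t unfolding s_def
      by (cases "t = 0") (auto intro: add_nonneg_pos add_pos_nonneg)
    have suw: "u + w = s" unfolding s_def s1_def s2_def u w by (simp add: algebra_simps)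
    define l where "l = t* s2/s"
    have l01: "0 \<le> l" "l \<le> 1"
      using t s1p s2p sp unfolding l_def s_def by (auto simp: divide_le_eq_1)
    have ml: "1 - l = (1-t)* s1/s" unfolding l_def s_def using sp s_def by (simp add: field_simps)
    have x: "u1/s1 \<in> {0..1}" "u2/s2 \<in> {0..1}" using frac01 nn s1_def s2_def by auto
    have comb: "(1-l) *\<^sub>R (u1/s1) + l *\<^sub>R (u2/s2) = u / s"
    proof -
      have "(1-l) * (u1/s1) = (1-t)*u1/s" unfolding ml using s1p sp by (simp add: field_simps)
      moreover have "l * (u2/s2) = t*u2/s" unfolding l_def using s2p sp by (simp add: field_simps)
      ultimately show ?thesis by (simp add: u add_divide_distrib)
    qed
    have "V (u/s) \<le> (1-l) * V (u1/s1) + l * V (u2/s2)"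
      using convex_onD[OF V l01 x] comb by simp
    then have "s * V (u/s) \<le> s * ((1-l) * V (u1/s1) + l * V (u2/s2))"
      using sp by (simp add: mult_left_mono)
    also have "\<dots> = (s * (1-l)) * V (u1/s1) + (s * l) * V (u2/s2)"
      by (simp add: algebra_simps)
    also have "\<dots> = (1-t) * (s1 * V (u1/s1)) + t * (s2 * V(u2/s2))"
    proof -
      have "s * (1-l) = (1-t) * s1" unfolding ml using sp by simp
      moreover have "s * l = t * s2" unfolding l_def using sp by simp
      ultimately show ?thesis by simp
    qed
    finally show ?thesis unfolding persp_def suw s1_def s2_def by simp
  qed
qed



locale ctx =
  fixes \<beta> :: "real \<Rightarrow> real" and C \<delta> :: real
  assumes Cpos: "C > 0" and d0: "0 \<le> \<delta>" and d1: "\<delta> < 1"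
    and bnn: "\<forall>q\<in>{1/2..1}. 0 \<le> \<beta> q" and bmono: "\<forall>q\<in>{1/2..1}. \<beta> q \<le> \<beta> 1"
    and bhalf: "\<beta> (1/2) = 0" and bconc: "concave_on {1/2..1} \<beta>"
begin

definition Q where "Q V b q = r_A \<beta> C b q + \<delta> * EV V b q"
definition T where "T V b = (SUP q\<in>{1/2..1}. Q V b q)"
definition P where "P V b q = - \<beta> q - C*(1-q) + \<delta> * (persp V (q*b) ((1-q)*(1-b)) + persp V ((1-q)*b) (q*(1-b)))"
definition H where "H V b = - C * min b (1-b) + \<delta> * V b"
definition M where "M = \<beta> 1 + C"
definition K where "K = M / (1-\<delta>)"
definition bnd where "bnd V \<longleftrightarrow> (\<forall>x\<in>{0..1}. -K \<le> V x \<and> V x \<le> 0)"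

lemma M_pos: "M > 0"
proof -
  have "0 \<le> \<beta> 1" using bnn by auto
  then show ?thesis using Cpos unfolding M_def by auto
qed
lemma K_pos: "K > 0" using M_pos d1 unfolding K_def by auto
lemma K_eq: "M + \<delta> * K = K" using d1 unfolding K_def by (simp add: field_simps)

lemma EV_bnd: assumes "bnd V" "0 \<le> b" "b \<le> 1" "0 \<le> q" "q \<le> 1"
  shows "EV V b q \<le> 0" "-K \<le> EV V b q"
proof -
  have y: "0 \<le> sig_y b q" "sig_y b q \<le> 1" using y01 assms(2-) by auto
  have g: "-K \<le> V (pG b q)" "V (pG b q) \<le> 0" "-K \<le> V (pB b q)" "V (pB b q) \<le> 0" "-K \<le> V b" "V b \<le> 0"
    using assms pG01[of b q] pB01[of b q] unfolding bnd_def by auto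
  have "sig_y b q * V (pG b q) \<le> 0" "(1 - sig_y b q) * V (pB b q) \<le> 0"
    using y g by (auto simp: mult_nonneg_nonpos)
  then show "EV V b q \<le> 0" using g unfolding EV_def by auto
  have "sig_y b q * (-K) \<le> sig_y b q * V (pG b q)" "(1 - sig_y b q) * (-K) \<le> (1 - sig_y b q) * V (pB b q)"
    using mult_left_mono[OF g(1) y(1)] mult_left_mono[OF g(3), of "1 - sig_y b q"] y by auto
  then have "-K \<le> sig_y b q * V (pG b q) + (1 - sig_y b q) * V (pB b q)" by (simp add: algebra_simps)
  then show "-K \<le> EV V b q" using g unfolding EV_def by auto
qed

lemma EV_mono: assumes "\<forall>x\<in>{0..1}. V x \<le> W x + d" "0 \<le> b" "b \<le> 1" "0 \<le> q" "q \<le> 1"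
  shows "EV V b q \<le> EV W b q + d"
proof -
  have y: "0 \<le> sig_y b q" "sig_y b q \<le> 1" using y01 assms(2-) by auto
  have g: "V (pG b q) \<le> W (pG b q) + d" "V (pB b q) \<le> W (pB b q) + d" "V b \<le> W b + d"
    using assms pG01[of b q] pB01[of b q] by auto
  have "sig_y b q * V (pG b q) \<le> sig_y b q * (W (pG b q) + d)"
       "(1 - sig_y b q) * V (pB b q) \<le> (1 - sig_y b q) * (W (pB b q) + d)"
    using y g by (auto intro: mult_left_mono)
  then show ?thesis using g unfolding EV_def by (auto simp: algebra_simps)
qed

lemma r_bnd: assumes "0 \<le> b" "b \<le> 1" "1/2 \<le> q" "q \<le> 1"
  shows "r_A \<beta> C b q \<le> 0" "-M \<le> r_A \<beta> C b q"
proof -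
  have m: "0 \<le> min b (min (1-b) (1-q))" "min b (min (1-b) (1-q)) \<le> 1" using assms by auto
  have bq: "0 \<le> \<beta> q" "\<beta> q \<le> \<beta> 1" using assms bnn bmono by auto
  have "0 \<le> C * min b (min (1-b) (1-q))" "C * min b (min (1-b) (1-q)) \<le> C"
    using m Cpos by (auto simp: mult_left_le)
  then show "r_A \<beta> C b q \<le> 0" "-M \<le> r_A \<beta> C b q" using bq unfolding r_A_def M_def by auto
qed

lemma Q_le0: assumes "bnd V" "0 \<le> b" "b \<le> 1" "1/2 \<le> q" "q \<le> 1" shows "Q V b q \<le> 0"
  using r_bnd[OF assms(2-)] mult_nonneg_nonpos[OF d0 EV_bnd(1)[OF assms(1-3), of q]] assms unfolding Q_def
  by simp

lemma bddQ: assumes "bnd V" "0 \<le> b" "b \<le> 1" shows "bdd_above (Q V b ` {1/2..1})"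
  using Q_le0[OF assms] by (intro bdd_aboveI[of _ 0]) auto

lemma Q_le_T: assumes "bnd V" "0 \<le> b" "b \<le> 1" "1/2 \<le> q" "q \<le> 1" shows "Q V b q \<le> T V b"
  unfolding T_def using assms by (intro cSUP_upper bddQ) auto

lemma T_le: assumes "\<And>q. 1/2 \<le> q \<Longrightarrow> q \<le> 1 \<Longrightarrow> Q V b q \<le> c" shows "T V b \<le> c"
  unfolding T_def using assms by (intro cSUP_least) auto

lemma F1: assumes "0 \<le> b" "b \<le> 1" "1/2 \<le> q" "q \<le> 1" "1 - q \<le> b" "b \<le> q"
  shows "Q V b q = P V b q"
proof -
  have "min b (min (1-b) (1-q)) = 1 - q" using assms by (auto simp: min_def)
  moreover have "persp V (q*b) ((1-q)*(1-b)) = sig_y b q * V (pG b q)"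
    unfolding persp_def pG_def sig_y_eq ..
  moreover have "persp V ((1-q)*b) (q*(1-b)) = (1 - sig_y b q) * V (pB b q)"
    unfolding persp_def pB_def sig_z_eq[symmetric] sig_z_eq2 ..
  ultimately show ?thesis using assms unfolding Q_def P_def EV_def r_A_def by simp
qed

lemma F2: assumes "0 \<le> b" "b \<le> 1" "1/2 \<le> q" "q \<le> 1" "\<not> (1 - q \<le> b \<and> b \<le> q)"
  shows "Q V b q \<le> H V b"
proof -
  have "min b (min (1-b) (1-q)) = min b (1-b)" using assms by (auto simp: min_def)
  moreover have "EV V b q = V b" using assms(5) unfolding EV_def by auto
  moreover have "0 \<le> \<beta> q" using assms bnn by auto
  ultimately show ?thesis unfolding Q_def H_def r_A_def by simp
qed

lemma F3: assumes "0 \<le> b" "b \<le> 1" shows "Q V b (1/2) = H V b"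
proof (cases "b = 1/2")
  case True
  then have "Q V b (1/2) = P V b (1/2)" using F1 by simp
  also have "\<dots> = H V b" unfolding P_def H_def persp_def True using bhalf by simp
  finally show ?thesis .
next
  case False
  have "min b (min (1-b) (1-1/2)) = min b (1-b)" using assms by (auto simp: min_def)
  then show ?thesis using assms False bhalf unfolding Q_def H_def EV_def r_A_def by auto
qed

lemma P_half: "P V b (1/2) = - C/2 + \<delta> * V b"
proof -
  have e: "1/2*b + (1-1/2)*(1-b) = (1/2::real)" by (simp add: field_simps)
  have "persp V (1/2*b) ((1-1/2)*(1-b)) = V b / 2" unfolding persp_def e by simp
  then show ?thesis unfolding P_def using bhalf by simp
qed

lemma F4: assumes V: "convex_on {0..1} V" "bnd V" and b: "0 \<le> b" "b \<le> 1" and q: "1/2 \<le> q" "q \<le> 1"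
  shows "P V b q \<le> T V b"
proof -
  define m where "m = max b (1-b)"
  have m: "1/2 \<le> m" "m \<le> 1" "1 - m \<le> b" "b \<le> m" using b unfolding m_def max_def by auto
  have PmT: "P V b m \<le> T V b"
    using F1[OF b m(1,2,3,4), of V] Q_le_T[OF V(2) b m(1,2)] by simp
  have "min b (1-b) \<le> 1/2" by (auto simp: min_def)
  then have "C * min b (1-b) \<le> C * (1/2)" using Cpos by (intro mult_left_mono) auto
  then have "P V b (1/2) \<le> H V b" unfolding P_half H_def by simp
  also have "\<dots> = Q V b (1/2)" using F3[OF b] by simp
  also have "\<dots> \<le> T V b" using Q_le_T[OF V(2) b] by simp
  finally have PhT: "P V b (1/2) \<le> T V b" .
  show ?thesis
  proof (cases "m \<le> q")
    case True
    then show ?thesis using F1[OF b q, of V] Q_le_T[OF V(2) b q] m by simp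
  next
    case False
    define t where "t = (q - 1/2) / (m - 1/2)"
    have t: "0 \<le> t" "t \<le> 1" using False q m unfolding t_def by (auto simp: divide_le_eq_1)
    have mh: "m - 1/2 \<noteq> 0" using False q by auto
    have h: "t * (m - 1/2) = q - 1/2" unfolding t_def using mh by simp
    have qt: "q = (1-t)*(1/2) + t*m" using h by (simp add: algebra_simps diff_divide_distrib)
    have hb: "1/2 \<in> {1/2..1::real}" "m \<in> {1/2..1}" using m by auto
    have "(1-t) * \<beta> (1/2) + t * \<beta> m \<le> \<beta> ((1-t) *\<^sub>R (1/2) + t *\<^sub>R m)"
      using concave_onD[OF bconc t hb] .
    then have bt: "t * \<beta> m \<le> \<beta> q" using bhalf qt by simp
    have nn: "0 \<le> 1/2*b" "0 \<le> (1-1/2)*(1-b)" "0 \<le> m*b" "0 \<le> (1-m)*(1-b)"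
      "0 \<le> (1-1/2)*b" "0 \<le> 1/2*(1-b)" "0 \<le> (1-m)*b" "0 \<le> m*(1-b)" using b m by auto
    have p1: "persp V (q*b) ((1-q)*(1-b)) \<le> (1-t) * persp V (1/2*b) ((1-1/2)*(1-b)) + t * persp V (m*b) ((1-m)*(1-b))"
      by (rule persp_conv[OF V(1) nn(1-4) t]) (simp_all add: qt algebra_simps)
    have p2: "persp V ((1-q)*b) (q*(1-b)) \<le> (1-t) * persp V ((1-1/2)*b) (1/2*(1-b)) + t * persp V ((1-m)*b) (m*(1-b))"
      by (rule persp_conv[OF V(1) nn(5-8) t]) (simp_all add: qt algebra_simps)
    have "\<delta> * (persp V (q*b) ((1-q)*(1-b)) + persp V ((1-q)*b) (q*(1-b))) \<le>
       \<delta> * ((1-t) * persp V (1/2*b) ((1-1/2)*(1-b)) + t * persp V (m*b) ((1-m)*(1-b)) +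
             ((1-t) * persp V ((1-1/2)*b) (1/2*(1-b)) + t * persp V ((1-m)*b) (m*(1-b))))"
      using p1 p2 d0 by (intro mult_left_mono) auto
    then have "P V b q \<le> (1-t) * P V b (1/2) + t * P V b m"
      unfolding P_def using bt bhalf by (simp add: qt algebra_simps)
    also have "\<dots> \<le> (1-t) * T V b + t * T V b"
      using PhT PmT t by (intro add_mono mult_left_mono) auto
    finally show ?thesis by (simp add: algebra_simps)
  qed
qed

lemma P_conv_b: assumes V: "convex_on {0..1} V" and x: "0 \<le> x" "x \<le> 1" and y: "0 \<le> y" "y \<le> 1"
  and t: "0 \<le> t" "t \<le> 1" and q: "0 \<le> q" "q \<le> 1"
  shows "P V ((1-t)*x + t*y) q \<le> (1-t) * P V x q + t * P V y q"
proof -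
  let ?z = "(1-t)*x + t*y"
  have z: "0 \<le> ?z" "?z \<le> 1" using x y t convex_bound_le[of x 1 y "1-t" t] by auto
  have nn: "0 \<le> q*x" "0 \<le> (1-q)*(1-x)" "0 \<le> q*y" "0 \<le> (1-q)*(1-y)"
     "0 \<le> (1-q)*x" "0 \<le> q*(1-x)" "0 \<le> (1-q)*y" "0 \<le> q*(1-y)" using x y q by auto
  have p1: "persp V (q*?z) ((1-q)*(1-?z)) \<le> (1-t) * persp V (q*x) ((1-q)*(1-x)) + t * persp V (q*y) ((1-q)*(1-y))"
    by (rule persp_conv[OF V nn(1-4) t]) (simp_all add: algebra_simps)
  have p2: "persp V ((1-q)*?z) (q*(1-?z)) \<le> (1-t) * persp V ((1-q)*x) (q*(1-x)) + t * persp V ((1-q)*y) (q*(1-y))"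
    by (rule persp_conv[OF V nn(5-8) t]) (simp_all add: algebra_simps)
  have "\<delta> * (persp V (q*?z) ((1-q)*(1-?z)) + persp V ((1-q)*?z) (q*(1-?z))) \<le>
     \<delta> * ((1-t) * persp V (q*x) ((1-q)*(1-x)) + t * persp V (q*y) ((1-q)*(1-y)) +
        ((1-t) * persp V ((1-q)*x) (q*(1-x)) + t * persp V ((1-q)*y) (q*(1-y))))"
    using p1 p2 d0 by (intro mult_left_mono) auto
  then show ?thesis unfolding P_def by (simp add: algebra_simps)
qed

lemma H_conv: assumes V: "convex_on {0..1} V" and x: "0 \<le> x" "x \<le> 1" and y: "0 \<le> y" "y \<le> 1"
  and t: "0 \<le> t" "t \<le> 1"
  shows "H V ((1-t)*x + t*y) \<le> (1-t) * H V x + t * H V y"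
proof -
  let ?z = "(1-t)*x + t*y"
  have a: "(1-t) * min x (1-x) \<le> (1-t) * x" "(1-t) * min x (1-x) \<le> (1-t) * (1-x)"
    "t * min y (1-y) \<le> t * y" "t * min y (1-y) \<le> t * (1-y)"
    using t by (auto intro: mult_left_mono)
  have "(1-t) * min x (1-x) + t * min y (1-y) \<le> min ?z (1-?z)"
    using a by (auto simp: algebra_simps)
  then have c: "C * ((1-t) * min x (1-x) + t * min y (1-y)) \<le> C * min ?z (1-?z)"
    using Cpos by (intro mult_left_mono) auto
  have "V ?z \<le> (1-t) * V x + t * V y" using convex_onD[OF V t, of x y] x y by simp
  then have "\<delta> * V ?z \<le> \<delta> * ((1-t) * V x + t * V y)" using d0 by (intro mult_left_mono) auto
  then show ?thesis using c unfolding H_def by (simp add: algebra_simps)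
qed

lemma T_conv: assumes V: "convex_on {0..1} V" "bnd V" shows "convex_on {0..1} (T V)"
proof (rule convex_onI)
  show "convex {0..1::real}" by simp
  fix t x y :: real assume t: "0 < t" "t < 1" and xy: "x \<in> {0..1}" "y \<in> {0..1}"
  have z: "0 \<le> (1-t)*x + t*y" "(1-t)*x + t*y \<le> 1"
    using t xy convex_bound_le[of x 1 y "1-t" t] by auto
  have "T V ((1-t)*x + t*y) \<le> (1-t) * T V x + t * T V y"
  proof (rule T_le)
    fix q :: real assume q: "1/2 \<le> q" "q \<le> 1"
    show "Q V ((1-t)*x + t*y) q \<le> (1-t) * T V x + t * T V y"
    proof (cases "1 - q \<le> (1-t)*x + t*y \<and> (1-t)*x + t*y \<le> q")
      case True
      then have "Q V ((1-t)*x + t*y) q = P V ((1-t)*x + t*y) q" using F1 z q by auto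
      also have "\<dots> \<le> (1-t) * P V x q + t * P V y q" using P_conv_b[OF V(1), of x y t q] xy t q by auto
      also have "\<dots> \<le> (1-t) * T V x + t * T V y"
        using F4[OF V, of x q] F4[OF V, of y q] xy q t by (intro add_mono mult_left_mono) auto
      finally show ?thesis .
    next
      case False
      then have "Q V ((1-t)*x + t*y) q \<le> H V ((1-t)*x + t*y)" using F2 z q by auto
      also have "\<dots> \<le> (1-t) * H V x + t * H V y" using H_conv[OF V(1), of x y t] xy t by auto
      also have "\<dots> \<le> (1-t) * T V x + t * T V y"
        using F3[of x V] F3[of y V] Q_le_T[OF V(2), of x "1/2"] Q_le_T[OF V(2), of y "1/2"] xy t
        by (intro add_mono mult_left_mono) auto
      finally show ?thesis .
    qed
  qed
  then show "T V ((1 - t) *\<^sub>R x + t *\<^sub>R y) \<le> (1 - t) * T V x + t * T V y" by simp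
qed

lemma T_bnd: assumes "bnd V" shows "bnd (T V)"
  unfolding bnd_def
proof
  fix b :: real assume b: "b \<in> {0..1}"
  have "T V b \<le> 0" using Q_le0[OF assms] b by (intro T_le) auto
  moreover have "-K \<le> T V b"
  proof -
    have "min b (1-b) \<le> 1" by auto
    then have "C * min b (1-b) \<le> C" using Cpos by (simp add: mult_left_le)
    moreover have "\<delta> * (-K) \<le> \<delta> * V b" using assms b d0 unfolding bnd_def by (intro mult_left_mono) auto
    moreover have "0 \<le> \<beta> 1" using bnn by auto
    ultimately have "-K \<le> H V b" using K_eq M_pos unfolding H_def M_def by (simp add: algebra_simps)
    also have "\<dots> = Q V b (1/2)" using F3 b by simp
    also have "\<dots> \<le> T V b" using Q_le_T[OF assms] b by simp
    finally show ?thesis .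
  qed
  ultimately show "-K \<le> T V b \<and> T V b \<le> 0" by simp
qed

lemma T_contr: assumes W: "bnd W" and le: "\<forall>x\<in>{0..1}. V x \<le> W x + d" and b: "0 \<le> b" "b \<le> 1"
  shows "T V b \<le> T W b + \<delta> * d"
proof (rule T_le)
  fix q :: real assume q: "1/2 \<le> q" "q \<le> 1"
  have "\<delta> * EV V b q \<le> \<delta> * (EV W b q + d)" using EV_mono[OF le b, of q] q d0 by (intro mult_left_mono) auto
  then have "Q V b q \<le> Q W b q + \<delta> * d" unfolding Q_def by (simp add: algebra_simps)
  also have "\<dots> \<le> T W b + \<delta> * d" using Q_le_T[OF W b q] by simp
  finally show "Q V b q \<le> T W b + \<delta> * d" .
qed

fun Vn :: "nat \<Rightarrow> real \<Rightarrow> real" where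
  "Vn 0 = (\<lambda>_. 0)"
| "Vn (Suc n) = T (Vn n)"

lemma Vn_bnd: "bnd (Vn n)"
proof (induction n)
  case 0
  then show ?case using K_pos by (simp add: bnd_def)
next
  case (Suc n)
  then show ?case by (simp add: T_bnd)
qed

lemma Vn_conv: "convex_on {0..1} (Vn n)"
  by (induction n) (auto simp: T_conv Vn_bnd convex_on_const)

lemma Vn_step: "\<forall>x\<in>{0..1}. Vn n x \<le> Vn (Suc n) x + \<delta>^n * K"
proof (induction n)
  case 0
  then show ?case using Vn_bnd[of 1] unfolding bnd_def by auto
next
  case (Suc n)
  show ?case
  proof
    fix x :: real assume x: "x \<in> {0..1}"
    have "T (Vn n) x \<le> T (Vn (Suc n)) x + \<delta> * (\<delta>^n * K)"
      using T_contr[OF Vn_bnd Suc.IH] x by auto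
    then show "Vn (Suc n) x \<le> Vn (Suc (Suc n)) x + \<delta>^Suc n * K" by simp
  qed
qed

end


context ctx begin

lemma pol_in: "pol \<in> policies \<Longrightarrow> x \<in> {0..1} \<Longrightarrow> 1/2 \<le> pol x \<and> pol x \<le> 1"
  unfolding policies_def by auto

lemma dist_supp: assumes "pol \<in> policies" "b \<in> {0..1}"
  shows "set_pmf (belief_dist pol b k) \<subseteq> {0..1} \<and> finite (set_pmf (belief_dist pol b k))"
proof (induction k)
  case 0
  then show ?case using assms by simp
next
  case (Suc k)
  have st: "\<And>x. x \<in> set_pmf (belief_dist pol b k) \<Longrightarrow>
     set_pmf (belief_step x (pol x)) \<subseteq> {0..1} \<and> finite (set_pmf (belief_step x (pol x)))"
  proof -
    fix x assume "x \<in> set_pmf (belief_dist pol b k)"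
    then have x: "x \<in> {0..1}" using Suc by auto
    then show "set_pmf (belief_step x (pol x)) \<subseteq> {0..1} \<and> finite (set_pmf (belief_step x (pol x)))"
      using set_step[of x "pol x"] pol_in[OF assms(1) x] by auto
  qed
  show ?case using Suc st by auto
qed

lemma E_next: assumes "pol \<in> policies" "b \<in> {0..1}"
  shows "measure_pmf.expectation (belief_dist pol b (Suc k)) f =
         measure_pmf.expectation (belief_dist pol b k) (\<lambda>x. EV f x (pol x))"
proof -
  let ?p = "belief_dist pol b k"
  let ?A = "set_pmf ?p"
  have fin: "finite ?A" and sub: "?A \<subseteq> {0..1}" using dist_supp[OF assms] by auto
  have "measure_pmf.expectation (belief_dist pol b (Suc k)) f =
        (\<Sum>a\<in>?A. pmf ?p a *\<^sub>R measure_pmf.expectation (belief_step a (pol a)) f)"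
    unfolding belief_dist.simps
  proof (rule pmf_expectation_bind[OF fin])
    fix x assume "x \<in> ?A"
    then have x: "x \<in> {0..1}" using sub by auto
    then show "finite (set_pmf (belief_step x (pol x)))" using set_step[of x "pol x"] pol_in[OF assms(1) x] by auto
  qed simp
  also have "\<dots> = (\<Sum>a\<in>?A. pmf ?p a *\<^sub>R EV f a (pol a))"
  proof (rule sum.cong)
    fix x assume "x \<in> ?A"
    then have x: "x \<in> {0..1}" using sub by auto
    then show "pmf ?p x *\<^sub>R measure_pmf.expectation (belief_step x (pol x)) f = pmf ?p x *\<^sub>R EV f x (pol x)"
      using exp_step[of x "pol x" f] pol_in[OF assms(1) x] by auto
  qed simp
  also have "\<dots> = measure_pmf.expectation ?p (\<lambda>x. EV f x (pol x))"
    by (rule integral_measure_pmf[OF fin, symmetric]) auto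
  finally show ?thesis .
qed

lemma intg: assumes "pol \<in> policies" "b \<in> {0..1}"
  shows "integrable (measure_pmf (belief_dist pol b k)) (f :: real \<Rightarrow> real)"
  using dist_supp[OF assms] by (intro integrable_measure_pmf_finite) auto

lemma Qexp: assumes "pol \<in> policies" "b \<in> {0..1}"
  shows "measure_pmf.expectation (belief_dist pol b k) (\<lambda>x. r_A \<beta> C x (pol x)) +
     \<delta> * measure_pmf.expectation (belief_dist pol b (Suc k)) V =
     measure_pmf.expectation (belief_dist pol b k) (\<lambda>x. Q V x (pol x))"
  unfolding E_next[OF assms] Q_def
  by (subst Bochner_Integration.integral_add[OF intg[OF assms] intg[OF assms]]) simp

lemma E_mono: fixes f g :: "real \<Rightarrow> real" assumes "pol \<in> policies" "b \<in> {0..1}" "\<And>x. x \<in> {0..1} \<Longrightarrow> f x \<le> g x"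
  shows "measure_pmf.expectation (belief_dist pol b k) f \<le> measure_pmf.expectation (belief_dist pol b k) g"
  using dist_supp[OF assms(1,2), of k] assms(3)
  by (intro integral_mono_AE intg[OF assms(1,2)] AE_pmfI) auto

lemma upper_sum: assumes "pol \<in> policies" "b \<in> {0..1}"
  shows "\<forall>j. (\<Sum>k\<in>{j..<j+n}. \<delta>^k * measure_pmf.expectation (belief_dist pol b k) (\<lambda>x. r_A \<beta> C x (pol x)))
     \<le> \<delta>^j * measure_pmf.expectation (belief_dist pol b j) (Vn n)"
proof (induction n)
  case 0
  then show ?case by simp
next
  case (Suc n)
  show ?case
  proof
    fix j
    let ?E = "\<lambda>k g. measure_pmf.expectation (belief_dist pol b k) g"
    let ?R = "\<lambda>x. r_A \<beta> C x (pol x)"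
    have "(\<Sum>k\<in>{j..<j+Suc n}. \<delta>^k * ?E k ?R) = \<delta>^j * ?E j ?R + (\<Sum>k\<in>{Suc j..<Suc j+n}. \<delta>^k * ?E k ?R)"
      by (subst sum.atLeast_Suc_lessThan) auto
    also have "\<dots> \<le> \<delta>^j * ?E j ?R + \<delta>^(Suc j) * ?E (Suc j) (Vn n)"
      by (rule add_left_mono) (rule spec[OF Suc.IH])
    also have "\<dots> = \<delta>^j * (?E j ?R + \<delta> * ?E (Suc j) (Vn n))" by (simp add: algebra_simps)
    also have "\<dots> = \<delta>^j * ?E j (\<lambda>x. Q (Vn n) x (pol x))" using Qexp[OF assms] by simp
    also have "\<dots> \<le> \<delta>^j * ?E j (Vn (Suc n))"
    proof (intro mult_left_mono E_mono[OF assms])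
      fix x :: real assume x: "x \<in> {0..1}"
      show "Q (Vn n) x (pol x) \<le> Vn (Suc n) x" using Q_le_T[OF Vn_bnd, of x "pol x" n] x pol_in[OF assms(1) x] by auto
    qed (use d0 in auto)
    finally show "(\<Sum>k\<in>{j..<j+Suc n}. \<delta>^k * ?E k ?R) \<le> \<delta>^j * ?E j (Vn (Suc n))" .
  qed
qed

lemma E_bnd: fixes f :: "real \<Rightarrow> real" assumes "pol \<in> policies" "b \<in> {0..1}" "\<And>x. x \<in> {0..1} \<Longrightarrow> lo \<le> f x \<and> f x \<le> hi"
  shows "lo \<le> measure_pmf.expectation (belief_dist pol b k) f" "measure_pmf.expectation (belief_dist pol b k) f \<le> hi"
  using E_mono[OF assms(1,2), of "\<lambda>_. lo" f k] E_mono[OF assms(1,2), of f "\<lambda>_. hi" k] assms(3) by auto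

lemma R_E: assumes "pol \<in> policies" "b \<in> {0..1}"
  shows "-M \<le> measure_pmf.expectation (belief_dist pol b k) (\<lambda>x. r_A \<beta> C x (pol x))"
        "measure_pmf.expectation (belief_dist pol b k) (\<lambda>x. r_A \<beta> C x (pol x)) \<le> 0"
  using E_bnd[OF assms, of "-M" "\<lambda>x. r_A \<beta> C x (pol x)" 0 k] r_bnd pol_in[OF assms(1)] by auto

lemma summ: assumes "pol \<in> policies" "b \<in> {0..1}"
  shows "summable (\<lambda>k. \<delta>^k * measure_pmf.expectation (belief_dist pol b k) (\<lambda>x. r_A \<beta> C x (pol x)))"
proof (rule summable_comparison_test)
  show "summable (\<lambda>k. M * \<delta>^k)" using d0 d1 by (intro summable_mult summable_geometric) auto
  show "\<exists>N. \<forall>n\<ge>N. norm (\<delta>^n * measure_pmf.expectation (belief_dist pol b n) (\<lambda>x. r_A \<beta> C x (pol x))) \<le> M * \<delta>^n"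
  proof (intro exI allI impI)
    fix n :: nat
    have "\<bar>measure_pmf.expectation (belief_dist pol b n) (\<lambda>x. r_A \<beta> C x (pol x))\<bar> \<le> M"
      using R_E[OF assms, of n] by auto
    then have "\<delta>^n * \<bar>measure_pmf.expectation (belief_dist pol b n) (\<lambda>x. r_A \<beta> C x (pol x))\<bar> \<le> \<delta>^n * M"
      using d0 by (intro mult_left_mono) auto
    then show "norm (\<delta>^n * measure_pmf.expectation (belief_dist pol b n) (\<lambda>x. r_A \<beta> C x (pol x))) \<le> M * \<delta>^n"
      using d0 by (simp add: abs_mult mult.commute)
  qed
qed

lemma V_pol_le: assumes "pol \<in> policies" "b \<in> {0..1}"
  shows "V_pol \<beta> C \<delta> pol b \<le> Vn n b"
proof -
  let ?f = "\<lambda>k. \<delta>^k * measure_pmf.expectation (belief_dist pol b k) (\<lambda>x. r_A \<beta> C x (pol x))"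
  have s: "summable ?f" by (rule summ[OF assms])
  have "V_pol \<beta> C \<delta> pol b = (\<Sum>k. ?f (k + n)) + (\<Sum>i<n. ?f i)"
    unfolding V_pol_def by (rule suminf_split_initial_segment[OF s])
  also have "(\<Sum>k. ?f (k + n)) \<le> (\<Sum>k. (0::real))"
  proof (rule suminf_le)
    fix k show "?f (k + n) \<le> 0" using R_E(2)[OF assms, of "k+n"] d0 by (simp add: mult_nonneg_nonpos)
  qed (use summable_ignore_initial_segment[OF s, of n] in auto)
  also have "(\<Sum>i<n. ?f i) = (\<Sum>i\<in>{0..<0+n}. ?f i)" by (simp add: atLeast0LessThan)
  also have "\<dots> \<le> \<delta>^0 * measure_pmf.expectation (belief_dist pol b 0) (Vn n)"
    using upper_sum[OF assms, of n] by blast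
  finally show ?thesis by simp
qed

end


context ctx begin

lemma greedy_exists: assumes "bnd V" "\<epsilon> > 0"
  shows "\<exists>pol\<in>policies. \<forall>x\<in>{0..1}. T V x - \<epsilon> < Q V x (pol x)"
proof -
  have ex: "\<exists>q. q \<in> {1/2..1} \<and> T V x - \<epsilon> < Q V x q" if x: "x \<in> {0..1}" for x
  proof -
    have "T V x - \<epsilon> < (SUP q\<in>{1/2..1}. Q V x q)" using assms(2) unfolding T_def by simp
    then show ?thesis using less_cSUP_iff[of "{1/2..1::real}" "Q V x"] bddQ[OF assms(1)] x by auto
  qed
  define pol where "pol x = (if x \<in> {0..1} then (SOME q. q \<in> {1/2..1} \<and> T V x - \<epsilon> < Q V x q) else 1/2)" for x
  have "pol x \<in> {1/2..1} \<and> T V x - \<epsilon> < Q V x (pol x)" if "x \<in> {0..1}" for x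
    using someI_ex[OF ex[OF that]] that unfolding pol_def by simp
  then show ?thesis unfolding policies_def by (intro bexI[of _ pol]) auto
qed

lemma lower: assumes pol: "pol \<in> policies" and b: "b \<in> {0..1}" and V: "bnd V" and eta: "0 \<le> \<eta>"
  and gr: "\<forall>x\<in>{0..1}. V x - \<eta> \<le> Q V x (pol x)"
  shows "V b - \<eta> / (1-\<delta>) \<le> V_pol \<beta> C \<delta> pol b"
proof -
  let ?E = "\<lambda>k g. measure_pmf.expectation (belief_dist pol b k) g"
  let ?R = "\<lambda>x. r_A \<beta> C x (pol x)"
  let ?f = "\<lambda>k. \<delta>^k * ?E k ?R"
  have ind: "V b - \<eta> * (\<Sum>k<n. \<delta>^k) \<le> (\<Sum>k<n. ?f k) + \<delta>^n * ?E n V" for n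
  proof (induction n)
    case 0 then show ?case using eta by simp
  next
    case (Suc n)
    have "?E n V - \<eta> = ?E n (\<lambda>x. V x - \<eta>)"
      by (subst Bochner_Integration.integral_diff[OF intg[OF pol b] intg[OF pol b]]) simp
    also have "\<dots> \<le> ?E n (\<lambda>x. Q V x (pol x))" using gr by (intro E_mono[OF pol b]) auto
    also have "\<dots> = ?E n ?R + \<delta> * ?E (Suc n) V" using Qexp[OF pol b] by simp
    finally have "\<delta>^n * (?E n V - \<eta>) \<le> \<delta>^n * (?E n ?R + \<delta> * ?E (Suc n) V)"
      using d0 by (intro mult_left_mono) auto
    then show ?case using Suc.IH by (simp add: algebra_simps)
  qed
  have gs: "(\<Sum>k<n. \<delta>^k) \<le> 1/(1-\<delta>)" for n
  proof -
    have "(\<Sum>k<n. \<delta>^k) = (1 - \<delta>^n)/(1-\<delta>)" using d1 by (simp add: sum_gp_strict)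
    also have "\<dots> \<le> 1/(1-\<delta>)" using d0 d1 by (intro divide_right_mono) auto
    finally show ?thesis .
  qed
  have bnd_n: "V b - \<eta>/(1-\<delta>) \<le> (\<Sum>k<n. ?f k)" for n
  proof -
    have "?E n V \<le> 0" using E_bnd(2)[OF pol b, of "-K" V 0 n] V unfolding bnd_def by auto
    then have "\<delta>^n * ?E n V \<le> 0" using d0 by (simp add: mult_nonneg_nonpos)
    moreover have "\<eta> * (\<Sum>k<n. \<delta>^k) \<le> \<eta> * (1/(1-\<delta>))" using gs eta by (intro mult_left_mono) auto
    ultimately show ?thesis using ind[of n] by simp
  qed
  show ?thesis unfolding V_pol_def
    by (rule LIMSEQ_le_const[OF summable_LIMSEQ[OF summ[OF pol b]]]) (use bnd_n in auto)
qed

lemma pols_ne: "policies \<noteq> {}"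
proof -
  have "(\<lambda>_. 1/2) \<in> policies" unfolding policies_def by auto
  then show ?thesis by blast
qed

lemma Vopt_le: assumes "b \<in> {0..1}" shows "V_opt \<beta> C \<delta> b \<le> Vn n b"
  unfolding V_opt_def using V_pol_le[OF _ assms] pols_ne by (intro cSUP_least) auto

lemma Vopt_ge: assumes b: "b \<in> {0..1}" and e: "\<epsilon> > 0"
  shows "Vn n b - (\<epsilon> + \<delta>^n * K)/(1-\<delta>) \<le> V_opt \<beta> C \<delta> b"
proof -
  obtain pol where pol: "pol \<in> policies" and g: "\<forall>x\<in>{0..1}. T (Vn n) x - \<epsilon> < Q (Vn n) x (pol x)"
    using greedy_exists[OF Vn_bnd e] by blast
  have gr: "\<forall>x\<in>{0..1}. Vn n x - (\<epsilon> + \<delta>^n * K) \<le> Q (Vn n) x (pol x)"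
  proof
    fix x :: real assume x: "x \<in> {0..1}"
    have a: "Vn n x \<le> T (Vn n) x + \<delta>^n * K" using Vn_step[of n] x by simp
    have b: "T (Vn n) x - \<epsilon> < Q (Vn n) x (pol x)" using g x by blast
    show "Vn n x - (\<epsilon> + \<delta>^n * K) \<le> Q (Vn n) x (pol x)" using a b by linarith
  qed
  have nn: "0 \<le> \<epsilon> + \<delta>^n * K" using e K_pos d0 by (simp add: add_nonneg_nonneg less_imp_le)
  have "Vn n b - (\<epsilon> + \<delta>^n * K)/(1-\<delta>) \<le> V_pol \<beta> C \<delta> pol b"
    using lower[OF pol b Vn_bnd nn gr] .
  also have "\<dots> \<le> V_opt \<beta> C \<delta> b" unfolding V_opt_def
  proof (rule cSUP_upper[OF pol])
    show "bdd_above ((\<lambda>pol. V_pol \<beta> C \<delta> pol b) ` policies)"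
      using V_pol_le[OF _ b, of _ 0] by (intro bdd_aboveI[of _ 0]) auto
  qed
  finally show ?thesis .
qed

theorem Vopt_convex: "convex_on {0..1} (V_opt \<beta> C \<delta>)"
proof (rule convex_onI)
  show "convex {0..1::real}" by simp
  fix t x y :: real assume t: "0 < t" "t < 1" and xy: "x \<in> {0..1}" "y \<in> {0..1}"
  let ?z = "(1-t)*x + t*y"
  have z: "?z \<in> {0..1}" using t xy convex_bound_le[of x 1 y "1-t" t] by auto
  have key: "V_opt \<beta> C \<delta> ?z \<le> (1-t) * V_opt \<beta> C \<delta> x + t * V_opt \<beta> C \<delta> y + e" if e: "e > 0" for e
  proof -
    have "(\<lambda>n. \<delta>^n * K) \<longlonglongrightarrow> 0"
      by (rule tendsto_mult_left_zero[OF LIMSEQ_realpow_zero[OF d0 d1]])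
    moreover have "0 < e * (1-\<delta>) / 2" using e d1 by simp
    ultimately have "\<forall>\<^sub>F n in sequentially. \<delta>^n * K < e * (1-\<delta>) / 2"
      by (rule order_tendstoD(2))
    then obtain n where n: "\<delta>^n * K < e * (1-\<delta>) / 2" by (auto simp: eventually_sequentially)
    define \<epsilon> where "\<epsilon> = e * (1-\<delta>) / 2"
    have ep: "\<epsilon> > 0" using e d1 unfolding \<epsilon>_def by auto
    define c where "c = (\<epsilon> + \<delta>^n * K)/(1-\<delta>)"
    have "\<epsilon> + \<delta>^n * K \<le> e * (1-\<delta>)" using n unfolding \<epsilon>_def by simp
    then have c: "c \<le> e" using d1 unfolding c_def by (simp add: pos_divide_le_eq)
    have lx: "Vn n x \<le> V_opt \<beta> C \<delta> x + c" using Vopt_ge[OF xy(1) ep, of n] unfolding c_def by simp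
    have ly: "Vn n y \<le> V_opt \<beta> C \<delta> y + c" using Vopt_ge[OF xy(2) ep, of n] unfolding c_def by simp
    have "V_opt \<beta> C \<delta> ?z \<le> Vn n ?z" using Vopt_le[OF z] .
    also have "\<dots> \<le> (1-t) * Vn n x + t * Vn n y" using convex_onD[OF Vn_conv, of t x y n] t xy by simp
    also have "\<dots> \<le> (1-t) * (V_opt \<beta> C \<delta> x + c) + t * (V_opt \<beta> C \<delta> y + c)"
      using lx ly t by (intro add_mono mult_left_mono) auto
    also have "\<dots> = (1-t) * V_opt \<beta> C \<delta> x + t * V_opt \<beta> C \<delta> y + c" by (simp add: algebra_simps)
    finally show ?thesis using c by simp
  qed
  have "V_opt \<beta> C \<delta> ?z \<le> (1-t) * V_opt \<beta> C \<delta> x + t * V_opt \<beta> C \<delta> y"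
    by (rule field_le_epsilon[OF key])
  then show "V_opt \<beta> C \<delta> ((1 - t) *\<^sub>R x + t *\<^sub>R y) \<le> (1 - t) * V_opt \<beta> C \<delta> x + t * V_opt \<beta> C \<delta> y" by simp
qed

end

theorem theorem2:
  fixes \<beta> :: "real \<Rightarrow> real" and p C \<delta> :: real
  assumes "1/2 \<le> p" and "p < 1"
    and "C > 0"
    and "0 \<le> \<delta>" and "\<delta> < 1"
    and "\<forall>q\<in>{1/2..1}. 0 \<le> \<beta> q"
    and "mono_on {1/2..1} \<beta>"
    and "continuous_on {1/2..1} \<beta>"
    and "concave_on {1/2..1} \<beta>"
    and "\<beta> p = 0"
  shows "convex_on {0..1} (V_opt \<beta> C \<delta>)"
proof -
  have bm: "\<forall>q\<in>{1/2..1}. \<beta> q \<le> \<beta> 1"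
    using mono_onD[OF assms(7)] by auto
  have "\<beta> (1/2) \<le> \<beta> p" using mono_onD[OF assms(7), of "1/2" p] assms(1,2) by auto
  moreover have "0 \<le> \<beta> (1/2)" using assms(6) by auto
  ultimately have bh: "\<beta> (1/2) = 0" using assms(10) by auto
  interpret ctx \<beta> C \<delta>
    by unfold_locales (use assms bm bh in auto)
  show ?thesis by (rule Vopt_convex)
qed

end
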